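(* Let $G$ be a Frobenius group with cyclic Frobenius kernel $N$ of order $p^a$ and cyclic Frobenius complement $C$ of order $q^m$, where $p,q$ are primes and $a,m\ge 1$. Then $G\in\mathcal{D}_{(a+1)m-1}$.
   Context: $\mathcal{D}(G)$ denotes the number of conjugacy classes of nontrivial subgroups $H$ of the finite group $G$ with $N_G(H)\neq H$; $\mathcal{D}_n$ is the family of finite groups $G$ with $\mathcal{D}(G)=n$. *)

theory Defs
  imports "HOL-Algebra.Algebra"
begin

definition conjugate_set :: "('a, 'b) monoid_scheme \<Rightarrow> 'a \<Rightarrow> 'a set \<Rightarrow> 'a set" where
  "conjugate_set G g H = g <#\<^bsub>G\<^esub> H #>\<^bsub>G\<^esub> inv\<^bsub>G\<^esub> g"

definition frobenius_complement :: "('a, 'b) monoid_scheme \<Rightarrow> 'a set \<Rightarrow> bool" where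
  "frobenius_complement G H \<longleftrightarrow>
     subgroup H G \<and> H \<noteq> {\<one>\<^bsub>G\<^esub>} \<and> H \<noteq> carrier G \<and>
     (\<forall>g \<in> carrier G - H. H \<inter> conjugate_set G g H = {\<one>\<^bsub>G\<^esub>})"

definition frobenius_kernel :: "('a, 'b) monoid_scheme \<Rightarrow> 'a set \<Rightarrow> 'a set" where
  "frobenius_kernel G H =
     (carrier G - (\<Union>g \<in> carrier G. conjugate_set G g H)) \<union> {\<one>\<^bsub>G\<^esub>}"

definition subgroup_conj_class :: "('a, 'b) monoid_scheme \<Rightarrow> 'a set \<Rightarrow> 'a set set" where
  "subgroup_conj_class G H = {conjugate_set G g H | g. g \<in> carrier G}"

definition D_count :: "('a, 'b) monoid_scheme \<Rightarrow> nat" where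
  "D_count G = card (subgroup_conj_class G `
      {H. subgroup H G \<and> H \<noteq> {\<one>\<^bsub>G\<^esub>} \<and> normalizer G H \<noteq> H})"

end

theory Submission imports Defs "HOL-Computational_Algebra.Primes" begin

context group begin

lemma inv_cancel_left [simp]: "x \<in> carrier G \<Longrightarrow> y \<in> carrier G \<Longrightarrow> inv x \<otimes> (x \<otimes> y) = y"
  by (simp flip: m_assoc)
lemma inv_cancel_left2 [simp]: "x \<in> carrier G \<Longrightarrow> y \<in> carrier G \<Longrightarrow> x \<otimes> (inv x \<otimes> y) = y"
  by (simp flip: m_assoc)

lemma conj_eq: "conjugate_set G g S = (\<lambda>x. g \<otimes> x \<otimes> inv g) ` S"
  unfolding conjugate_set_def l_coset_def r_coset_def by auto

lemma conj_mem: "x \<in> S \<Longrightarrow> g \<otimes> x \<otimes> inv g \<in> conjugate_set G g S"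
  by (simp add: conj_eq)

lemma conj_comp: "g \<in> carrier G \<Longrightarrow> h \<in> carrier G \<Longrightarrow> S \<subseteq> carrier G \<Longrightarrow>
  conjugate_set G g (conjugate_set G h S) = conjugate_set G (g \<otimes> h) S"
  unfolding conj_eq image_image
proof (intro image_cong refl)
  fix x assume "g \<in> carrier G" "h \<in> carrier G" "S \<subseteq> carrier G" "x \<in> S"
  then have "x \<in> carrier G" by blast
  then show "g \<otimes> (h \<otimes> x \<otimes> inv h) \<otimes> inv g = g \<otimes> h \<otimes> x \<otimes> inv (g \<otimes> h)"
    using \<open>g \<in> carrier G\<close> \<open>h \<in> carrier G\<close> by (simp add: m_assoc inv_mult_group)
qed

lemma conj_one: "S \<subseteq> carrier G \<Longrightarrow> conjugate_set G \<one> S = S"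
  unfolding conj_eq by (force intro: image_eqI)

lemma conj_inv_cancel: "g \<in> carrier G \<Longrightarrow> S \<subseteq> carrier G \<Longrightarrow>
  conjugate_set G (inv g) (conjugate_set G g S) = S"
  by (simp add: conj_comp conj_one)

lemma conj_subset: "g \<in> carrier G \<Longrightarrow> S \<subseteq> carrier G \<Longrightarrow> conjugate_set G g S \<subseteq> carrier G"
  unfolding conj_eq by auto

lemma conj_inj: "g \<in> carrier G \<Longrightarrow> inj_on (\<lambda>x. g \<otimes> x \<otimes> inv g) (carrier G)"
proof (rule inj_onI)
  fix x y assume g: "g \<in> carrier G" and xy: "x \<in> carrier G" "y \<in> carrier G"
    and e: "g \<otimes> x \<otimes> inv g = g \<otimes> y \<otimes> inv g"
  have "g \<otimes> x = g \<otimes> y" using e g xy r_cancel[of "inv g" "g \<otimes> x" "g \<otimes> y"] by simp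
  then show "x = y" using g xy l_cancel by blast
qed

lemma conj_card: "g \<in> carrier G \<Longrightarrow> S \<subseteq> carrier G \<Longrightarrow> card (conjugate_set G g S) = card S"
  unfolding conj_eq by (rule card_image) (rule inj_on_subset[OF conj_inj])

lemma conj_pow: "g \<in> carrier G \<Longrightarrow> x \<in> carrier G \<Longrightarrow>
   (g \<otimes> x \<otimes> inv g) [^] (n::nat) = g \<otimes> x [^] n \<otimes> inv g"
proof (induction n)
  case 0 then show ?case by simp
next
  case (Suc n)
  have "(g \<otimes> x \<otimes> inv g) [^] Suc n = (g \<otimes> x [^] n \<otimes> inv g) \<otimes> (g \<otimes> x \<otimes> inv g)"
    using Suc by simp
  also have "\<dots> = g \<otimes> (x [^] n \<otimes> x) \<otimes> inv g"
    using Suc.prems by (simp add: m_assoc)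
  finally show ?case by simp
qed

lemma conj_subgroup: "subgroup H G \<Longrightarrow> g \<in> carrier G \<Longrightarrow> subgroup (conjugate_set G g H) G"
proof -
  assume H: "subgroup H G" and g: "g \<in> carrier G"
  have Hc: "H \<subseteq> carrier G" using H subgroup.subset by blast
  show ?thesis
  proof (rule subgroupI)
    show "conjugate_set G g H \<subseteq> carrier G" using conj_subset[OF g Hc] .
    show "conjugate_set G g H \<noteq> {}" using subgroup.one_closed[OF H] by (auto simp: conj_eq)
  next
    fix a assume "a \<in> conjugate_set G g H"
    then obtain x where x: "x \<in> H" "a = g \<otimes> x \<otimes> inv g" by (auto simp: conj_eq)
    have "inv a = g \<otimes> inv x \<otimes> inv g" using x Hc g
      by (simp add: inv_mult_group m_assoc subsetD)
    then show "inv a \<in> conjugate_set G g H" using x H by (simp add: conj_eq subgroup.m_inv_closed)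
  next
    fix a b assume "a \<in> conjugate_set G g H" "b \<in> conjugate_set G g H"
    then obtain x y where x: "x \<in> H" "a = g \<otimes> x \<otimes> inv g" and y: "y \<in> H" "b = g \<otimes> y \<otimes> inv g"
      by (auto simp: conj_eq)
    have "a \<otimes> b = g \<otimes> (x \<otimes> y) \<otimes> inv g" using x y Hc g
      by (simp add: m_assoc subsetD)
    then show "a \<otimes> b \<in> conjugate_set G g H" using x y H by (simp add: conj_eq subgroup.m_closed)
  qed
qed

lemma normalizer_iff: "H \<subseteq> carrier G \<Longrightarrow> g \<in> normalizer G H \<longleftrightarrow> g \<in> carrier G \<and> conjugate_set G g H = H"
  unfolding normalizer_def stabilizer_def conjugate_set_def by auto

lemma subgroup_in_normalizer: "subgroup H G \<Longrightarrow> H \<subseteq> normalizer G H"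
proof
  fix h assume H: "subgroup H G" and h: "h \<in> H"
  have Hc: "H \<subseteq> carrier G" using H subgroup.subset by blast
  have hc: "h \<in> carrier G" using h Hc by blast
  have "conjugate_set G h H = H"
  proof
    show "conjugate_set G h H \<subseteq> H" using h H
      by (auto simp: conj_eq subgroup.m_closed subgroup.m_inv_closed)
    show "H \<subseteq> conjugate_set G h H"
    proof
      fix y assume y: "y \<in> H"
      have "y = h \<otimes> (inv h \<otimes> y \<otimes> h) \<otimes> inv h" using y Hc hc
        by (simp add: m_assoc subsetD)
      moreover have "inv h \<otimes> y \<otimes> h \<in> H" using h y H by (simp add: subgroup.m_closed subgroup.m_inv_closed)
      ultimately show "y \<in> conjugate_set G h H" by (metis conj_mem)
    qed
  qed
  then show "h \<in> normalizer G H" using normalizer_iff[OF Hc] hc by blast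
qed

lemma finite_closed_subgroup:
  assumes "finite (carrier G)" "H \<subseteq> carrier G" "\<one> \<in> H" "\<And>a b. a \<in> H \<Longrightarrow> b \<in> H \<Longrightarrow> a \<otimes> b \<in> H"
  shows "subgroup H G"
proof (rule subgroupI)
  show "H \<subseteq> carrier G" "H \<noteq> {}" using assms by auto
  show "a \<otimes> b \<in> H" if "a \<in> H" "b \<in> H" for a b using assms that by blast
next
  fix a assume a: "a \<in> H"
  have ac: "a \<in> carrier G" using a assms by blast
  have pw: "a [^] (n::nat) \<in> H" for n
  proof (induction n)
    case 0 then show ?case using assms(3) by simp
  next
    case (Suc n) then show ?case using assms(4)[OF Suc a] by simp
  qed
  have "ord a \<ge> 1" using ord_ge_1[OF assms(1) ac] .
  then have "a [^] (ord a - 1) \<otimes> a = \<one>"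
  proof -
    have "Suc (ord a - 1) = ord a" using \<open>ord a \<ge> 1\<close> by simp
    then have "a [^] (ord a - 1) \<otimes> a = a [^] ord a" using ac by (metis nat_pow_Suc)
    then show ?thesis using ac by simp
  qed
  then have "inv a = a [^] (ord a - 1)" using ac
    by (simp add: inv_equality)
  then show "inv a \<in> H" using pw by simp
qed


lemma subgroup_pow_card:
  assumes "subgroup S G" "finite S" "y \<in> S"
  shows "y [^] card S = \<one>"
proof -
  interpret S: group "G\<lparr>carrier := S\<rparr>" using subgroup.subgroup_is_group[OF assms(1) is_group] .
  have "y [^]\<^bsub>G\<lparr>carrier := S\<rparr>\<^esub> order (G\<lparr>carrier := S\<rparr>) = \<one>\<^bsub>G\<lparr>carrier := S\<rparr>\<^esub>"
    using S.pow_order_eq_1 assms(3) by simp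
  then show ?thesis by (simp add: order_def flip: nat_pow_consistent)
qed

lemma subgroup_card_dvd:
  assumes "subgroup S G" "subgroup Z G" "S \<subseteq> Z" "finite Z"
  shows "card S dvd card Z"
proof -
  interpret Z: group "G\<lparr>carrier := Z\<rparr>" using subgroup.subgroup_is_group[OF assms(2) is_group] .
  have "subgroup S (G\<lparr>carrier := Z\<rparr>)" using subgroup_incl assms by blast
  then have "card (rcosets\<^bsub>G\<lparr>carrier := Z\<rparr>\<^esub> S) * card S = order (G\<lparr>carrier := Z\<rparr>)"
    using Z.lagrange by blast
  then show ?thesis by (simp add: order_def) (metis dvd_triv_right)
qed

lemma cyclic_gen:
  assumes "finite (carrier G)" "subgroup Z G" "cyclic_group (G\<lparr>carrier := Z\<rparr>)"
  shows "\<exists>z\<in>Z. generate G {z} = Z \<and> ord z = card Z"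
proof -
  interpret Z: group "G\<lparr>carrier := Z\<rparr>" using subgroup.subgroup_is_group[OF assms(2) is_group] .
  obtain x where x: "x \<in> Z" "Z = range (\<lambda>n::int. x [^]\<^bsub>G\<lparr>carrier := Z\<rparr>\<^esub> n)"
    using assms(3) Z.cyclic_group by auto
  have xc: "x \<in> carrier G" using x(1) assms(2) subgroup.subset by blast
  have "Z = range (\<lambda>n::int. x [^] n)" using x int_pow_consistent[OF assms(2) x(1)] by simp
  then have "generate G {x} = Z" using generate_pow[OF xc] by auto
  moreover have "ord x = card (generate G {x})" using generate_pow_card[OF xc] .
  ultimately show ?thesis using x(1) by auto
qed

lemma cyclic_pow_sub:
  assumes fin: "finite (carrier G)" and z: "z \<in> carrier G" and Z: "generate G {z} = Z"
    and oz: "ord z = r ^ e" and r: "Factorial_Ring.prime r" and de: "d \<le> e"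
  shows "{y \<in> Z. y [^] (r ^ d) = \<one>} = generate G {z [^] (r ^ (e - d))}"
    and "card {y \<in> Z. y [^] (r ^ d) = \<one>} = r ^ d"
proof -
  define w where "w = z [^] (r ^ (e - d))"
  have wc: "w \<in> carrier G" using z by (simp add: w_def)
  have rpos: "r > 0" using r prime_gt_0_nat by blast
  have split: "r ^ e = r ^ (e - d) * r ^ d" using de by (simp flip: power_add)
  have ow: "ord w = r ^ d"
    unfolding w_def using ord_pow[OF z] oz split rpos by simp
  have Zeq: "Z = {z [^] k | k. k \<in> (UNIV :: nat set)}" using generate_pow_on_finite_carrier[OF fin z] Z by simp
  have Weq: "generate G {w} = {w [^] k | k. k \<in> (UNIV :: nat set)}" using generate_pow_on_finite_carrier[OF fin wc] .
  show eq: "{y \<in> Z. y [^] (r ^ d) = \<one>} = generate G {z [^] (r ^ (e - d))}"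
  proof
    show "{y \<in> Z. y [^] r ^ d = \<one>} \<subseteq> generate G {z [^] r ^ (e - d)}"
    proof
      fix y assume "y \<in> {y \<in> Z. y [^] r ^ d = \<one>}"
      then obtain k :: nat where k: "y = z [^] k" and y1: "y [^] r ^ d = \<one>" using Zeq by auto
      have "z [^] (k * r ^ d) = \<one>" using y1 k z by (simp add: nat_pow_pow)
      then have "r ^ e dvd k * r ^ d" using pow_eq_id[OF z] oz by simp
      then have "r ^ (e - d) dvd k" using split rpos by simp
      then obtain t where "k = r ^ (e - d) * t" by blast
      then have "y = w [^] t" using k z by (simp add: w_def nat_pow_pow)
      then show "y \<in> generate G {z [^] r ^ (e - d)}" using Weq w_def by auto
    qed
    show "generate G {z [^] r ^ (e - d)} \<subseteq> {y \<in> Z. y [^] r ^ d = \<one>}"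
    proof
      fix y assume "y \<in> generate G {z [^] r ^ (e - d)}"
      then obtain t :: nat where t: "y = w [^] t" using Weq w_def by auto
      then have "y = z [^] (r ^ (e - d) * t)" using z by (simp add: w_def nat_pow_pow)
      then have "y \<in> Z" using Zeq by auto
      moreover have "y [^] r ^ d = (w [^] r ^ d) [^] t" using t wc
        by (simp add: nat_pow_pow mult.commute)
      moreover have "w [^] r ^ d = \<one>" using ow wc pow_ord_eq_1 by metis
      ultimately show "y \<in> {y \<in> Z. y [^] r ^ d = \<one>}" by simp
    qed
  qed
  show "card {y \<in> Z. y [^] (r ^ d) = \<one>} = r ^ d"
    using eq generate_pow_card[OF wc] ow w_def by simp
qed

lemma cyc_pow_subgroup:
  assumes fin: "finite (carrier G)" and Z: "subgroup Z G" and cyc: "cyclic_group (G\<lparr>carrier := Z\<rparr>)"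
    and cZ: "card Z = r ^ e" and r: "Factorial_Ring.prime r" and de: "d \<le> e"
  shows "subgroup {y \<in> Z. y [^] (r ^ d) = \<one>} G" and "card {y \<in> Z. y [^] (r ^ d) = \<one>} = r ^ d"
proof -
  obtain z where z: "z \<in> Z" "generate G {z} = Z" "ord z = card Z" using cyclic_gen[OF fin Z cyc] by blast
  have zc: "z \<in> carrier G" using z Z subgroup.subset by blast
  have oz: "ord z = r ^ e" using z cZ by simp
  show "subgroup {y \<in> Z. y [^] (r ^ d) = \<one>} G"
    using cyclic_pow_sub(1)[OF fin zc z(2) oz r de] generate_is_subgroup zc by simp
  show "card {y \<in> Z. y [^] (r ^ d) = \<one>} = r ^ d"
    using cyclic_pow_sub(2)[OF fin zc z(2) oz r de] .
qed

lemma cyc_subgroup_eq: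
  assumes fin: "finite (carrier G)" and Z: "subgroup Z G" and cyc: "cyclic_group (G\<lparr>carrier := Z\<rparr>)"
    and cZ: "card Z = r ^ e" and r: "Factorial_Ring.prime r" and S: "subgroup S G" "S \<subseteq> Z"
  shows "\<exists>d\<le>e. S = {y \<in> Z. y [^] (r ^ d) = \<one>}"
proof -
  have finZ: "finite Z" using fin Z subgroup.subset finite_subset by blast
  have finS: "finite S" using finZ S(2) finite_subset by blast
  have "card S dvd r ^ e" using subgroup_card_dvd[OF S(1) Z S(2) finZ] cZ by simp
  then obtain d where d: "d \<le> e" "card S = r ^ d" using divides_primepow_nat[OF r] by blast
  have sub: "S \<subseteq> {y \<in> Z. y [^] (r ^ d) = \<one>}"
    using subgroup_pow_card[OF S(1) finS] d S(2) by auto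
  have "card S = card {y \<in> Z. y [^] (r ^ d) = \<one>}"
    using cyc_pow_subgroup(2)[OF fin Z cyc cZ r d(1)] d by simp
  then have "S = {y \<in> Z. y [^] (r ^ d) = \<one>}"
    using card_subset_eq[OF _ sub] finZ by simp
  then show ?thesis using d by blast
qed

lemma subgroup_nat_pow_closed: "subgroup H G \<Longrightarrow> h \<in> H \<Longrightarrow> h [^] (k::nat) \<in> H"
proof (induction k)
  case 0 then show ?case using subgroup.one_closed by simp
next
  case (Suc k) then show ?case using subgroup.m_closed[of H G "h [^] k" h] by simp
qed

lemma cyc_pow_gen:
  assumes fin: "finite (carrier G)" and Z: "subgroup Z G" and cyc: "cyclic_group (G\<lparr>carrier := Z\<rparr>)"
    and cZ: "card Z = r ^ e" and r: "Factorial_Ring.prime r" and de: "d \<le> e"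
  shows "\<exists>w\<in>carrier G. {y \<in> Z. y [^] (r ^ d) = \<one>} = {w [^] k | k. k \<in> (UNIV :: nat set)}"
proof -
  obtain z where z: "z \<in> Z" "generate G {z} = Z" "ord z = card Z" using cyclic_gen[OF fin Z cyc] by blast
  have zc: "z \<in> carrier G" using z Z subgroup.subset by blast
  have oz: "ord z = r ^ e" using z cZ by simp
  define w where "w = z [^] (r ^ (e - d))"
  have wc: "w \<in> carrier G" using zc w_def by simp
  have e1: "{y \<in> Z. y [^] (r ^ d) = \<one>} = generate G {w}"
    using cyclic_pow_sub(1)[OF fin zc z(2) oz r de] unfolding w_def .
  have e2: "generate G {w} = {w [^] k | k. k \<in> (UNIV :: nat set)}"
    using generate_pow_on_finite_carrier[OF fin wc] .
  show ?thesis
  proof (rule bexI[of _ w])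
    show "{y \<in> Z. y [^] (r ^ d) = \<one>} = {w [^] k | k. k \<in> (UNIV :: nat set)}" using e1 e2 by (rule trans)
    show "w \<in> carrier G" by (rule wc)
  qed
qed

lemma conj_selfnorm:
  assumes K: "subgroup K G" and nK: "normalizer G K = K" and x: "x \<in> carrier G"
  shows "normalizer G (conjugate_set G x K) = conjugate_set G x K"
proof
  have Kc: "K \<subseteq> carrier G" using K subgroup.subset by blast
  have xKc: "conjugate_set G x K \<subseteq> carrier G" using conj_subset[OF x Kc] .
  show "conjugate_set G x K \<subseteq> normalizer G (conjugate_set G x K)"
    using subgroup_in_normalizer[OF conj_subgroup[OF K x]] .
  show "normalizer G (conjugate_set G x K) \<subseteq> conjugate_set G x K"
  proof
    fix g assume "g \<in> normalizer G (conjugate_set G x K)"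
    then have g: "g \<in> carrier G" "conjugate_set G g (conjugate_set G x K) = conjugate_set G x K"
      using normalizer_iff[OF xKc] by auto
    define h where "h = inv x \<otimes> (g \<otimes> x)"
    have hc: "h \<in> carrier G" using h_def g x by simp
    have "conjugate_set G h K = conjugate_set G (inv x) (conjugate_set G g (conjugate_set G x K))"
      using conj_comp[OF g(1) x Kc] conj_comp[OF inv_closed[OF x] m_closed[OF g(1) x] Kc] h_def by simp
    also have "\<dots> = K" using g(2) conj_inv_cancel[OF x Kc] by simp
    finally have "h \<in> normalizer G K" using normalizer_iff[OF Kc] hc by blast
    then have "h \<in> K" using nK by simp
    moreover have "g = x \<otimes> h \<otimes> inv x" using h_def g x by (simp add: m_assoc)
    ultimately show "g \<in> conjugate_set G x K" using conj_mem[of h K x] by simp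
  qed
qed

lemma conj_class_eq:
  assumes K: "K \<subseteq> carrier G" and x: "x \<in> carrier G"
  shows "subgroup_conj_class G (conjugate_set G x K) = subgroup_conj_class G K"
proof
  show "subgroup_conj_class G (conjugate_set G x K) \<subseteq> subgroup_conj_class G K"
  proof
    fix Y assume "Y \<in> subgroup_conj_class G (conjugate_set G x K)"
    then obtain g where g: "g \<in> carrier G" "Y = conjugate_set G g (conjugate_set G x K)"
      unfolding subgroup_conj_class_def by auto
    then have "Y = conjugate_set G (g \<otimes> x) K" using conj_comp[OF g(1) x K] by simp
    then show "Y \<in> subgroup_conj_class G K" unfolding subgroup_conj_class_def using g(1) x by blast
  qed
  show "subgroup_conj_class G K \<subseteq> subgroup_conj_class G (conjugate_set G x K)"
  proof
    fix Y assume "Y \<in> subgroup_conj_class G K"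
    then obtain g where g: "g \<in> carrier G" "Y = conjugate_set G g K"
      unfolding subgroup_conj_class_def by auto
    have "conjugate_set G (g \<otimes> inv x) (conjugate_set G x K) = conjugate_set G (g \<otimes> inv x \<otimes> x) K"
      using conj_comp[OF _ x K, of "g \<otimes> inv x"] g x by simp
    also have "\<dots> = Y" using g x by (simp add: m_assoc)
    finally show "Y \<in> subgroup_conj_class G (conjugate_set G x K)"
      unfolding subgroup_conj_class_def using g(1) x by (metis (mono_tags, lifting) inv_closed m_closed mem_Collect_eq)
  qed
qed

end

locale frob = group G for G (structure) +
  fixes C N :: "'a set" and p q a m :: nat
  assumes fin: "finite (carrier G)" and fc: "frobenius_complement G C"
    and Ndef: "N = frobenius_kernel G C"
    and cycN: "cyclic_group (G\<lparr>carrier := N\<rparr>)" and cardN: "card N = p ^ a"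
    and cycC: "cyclic_group (G\<lparr>carrier := C\<rparr>)" and cardC: "card C = q ^ m"
    and pp: "Factorial_Ring.prime p" and qp: "Factorial_Ring.prime q" and a1: "a \<ge> 1" and m1: "m \<ge> 1"
begin

lemma C_sub: "subgroup C G" and C_ne: "C \<noteq> {\<one>}"
  and C_ti: "g \<in> carrier G \<Longrightarrow> g \<notin> C \<Longrightarrow> C \<inter> conjugate_set G g C = {\<one>}"
  using fc unfolding frobenius_complement_def by auto

lemma C_car: "C \<subseteq> carrier G" using C_sub subgroup.subset by blast

lemma N_car: "N \<subseteq> carrier G" and one_N: "\<one> \<in> N"
  unfolding Ndef frobenius_kernel_def by auto

lemma N_memD: "x \<in> N \<Longrightarrow> x \<noteq> \<one> \<Longrightarrow> g \<in> carrier G \<Longrightarrow> x \<notin> conjugate_set G g C"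
  unfolding Ndef frobenius_kernel_def by auto

lemma notN: "x \<in> carrier G \<Longrightarrow> x \<notin> N \<Longrightarrow> \<exists>g\<in>carrier G. x \<in> conjugate_set G g C"
  unfolding Ndef frobenius_kernel_def by auto

lemma N_sub: "subgroup N G"
proof -
  obtain x where x: "x \<in> N" "subgroup_generated (G\<lparr>carrier := N\<rparr>) {x} = G\<lparr>carrier := N\<rparr>"
    using cycN unfolding cyclic_group_def by auto
  have "carrier (subgroup_generated (G\<lparr>carrier := N\<rparr>) {x}) = N" using x(2) by simp
  then have Ng: "generate (G\<lparr>carrier := N\<rparr>) {x} = N"
    using x(1) by (simp add: carrier_subgroup_generated Int_absorb1)
  have cl: "u \<otimes> v \<in> N" if "u \<in> N" "v \<in> N" for u v
    using generate.eng[of u "G\<lparr>carrier := N\<rparr>" "{x}" v] that Ng by simp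
  show ?thesis using finite_closed_subgroup[OF fin N_car one_N cl] by blast
qed

lemma C_conj_car: "g \<in> carrier G \<Longrightarrow> conjugate_set G g C \<subseteq> carrier G"
  using conj_subset C_car by blast

lemma N_normal: assumes g: "g \<in> carrier G" and x: "x \<in> N" shows "g \<otimes> x \<otimes> inv g \<in> N"
proof (rule ccontr)
  assume y: "g \<otimes> x \<otimes> inv g \<notin> N"
  have xc: "x \<in> carrier G" using x N_car by blast
  have "x \<noteq> \<one>" using y one_N g by auto
  obtain h where h: "h \<in> carrier G" "g \<otimes> x \<otimes> inv g \<in> conjugate_set G h C"
    using notN[of "g \<otimes> x \<otimes> inv g"] y g xc by auto
  then obtain c where c: "c \<in> C" "g \<otimes> x \<otimes> inv g = h \<otimes> c \<otimes> inv h" by (auto simp: conj_eq)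
  have cc: "c \<in> carrier G" using c C_car by blast
  have "x = inv g \<otimes> (g \<otimes> x \<otimes> inv g) \<otimes> g" using g xc by (simp add: m_assoc)
  also have "\<dots> = (inv g \<otimes> h) \<otimes> c \<otimes> inv (inv g \<otimes> h)" using c(2) g h(1) cc
    by (simp add: m_assoc inv_mult_group)
  finally have "x \<in> conjugate_set G (inv g \<otimes> h) C" using c(1) conj_mem by metis
  then show False using N_memD[OF x \<open>x \<noteq> \<one>\<close>] g h(1) by auto
qed

lemma N_conj_C: "x \<in> N \<Longrightarrow> g \<in> carrier G \<Longrightarrow> x \<in> conjugate_set G g C \<Longrightarrow> x = \<one>"
  using N_memD by blast

lemma N_C: "x \<in> N \<Longrightarrow> x \<in> C \<Longrightarrow> x = \<one>"
  using N_conj_C[of x \<one>] conj_one[OF C_car] by auto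

lemma N_comm: "x \<in> N \<Longrightarrow> y \<in> N \<Longrightarrow> x \<otimes> y = y \<otimes> x"
proof -
  obtain z where z: "z \<in> N" "generate G {z} = N" using cyclic_gen[OF fin N_sub cycN] by blast
  have zc: "z \<in> carrier G" using z N_car by blast
  have Ne: "N = {z [^] k | k. k \<in> (UNIV :: nat set)}" using generate_pow_on_finite_carrier[OF fin zc] z by simp
  assume "x \<in> N" "y \<in> N"
  then obtain i j :: nat where "x = z [^] i" "y = z [^] j" using Ne by auto
  then show ?thesis using zc by (simp add: nat_pow_mult add.commute)
qed

lemma C_comm: "x \<in> C \<Longrightarrow> y \<in> C \<Longrightarrow> x \<otimes> y = y \<otimes> x"
proof -
  obtain z where z: "z \<in> C" "generate G {z} = C" using cyclic_gen[OF fin C_sub cycC] by blast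
  have zc: "z \<in> carrier G" using z C_car by blast
  have Ce: "C = {z [^] k | k. k \<in> (UNIV :: nat set)}" using generate_pow_on_finite_carrier[OF fin zc] z by simp
  assume "x \<in> C" "y \<in> C"
  then obtain i j :: nat where "x = z [^] i" "y = z [^] j" using Ce by auto
  then show ?thesis using zc by (simp add: nat_pow_mult add.commute)
qed

lemma conj_self: "c \<in> C \<Longrightarrow> conjugate_set G c C = C"
  using subgroup_in_normalizer[OF C_sub] normalizer_iff[OF C_car] by blast

lemma normC: "g \<in> carrier G \<Longrightarrow> conjugate_set G g C = C \<Longrightarrow> g \<in> C"
  using C_ti C_ne by force

lemma normalizer_C: "normalizer G C = C"
  using normalizer_iff[OF C_car] normC subgroup_in_normalizer[OF C_sub] by blast

lemma fpf: assumes c: "c \<in> C" and x: "x \<in> N" and e: "c \<otimes> x = x \<otimes> c" and x1: "x \<noteq> \<one>"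
  shows "c = \<one>"
proof -
  have xc: "x \<in> carrier G" and cc: "c \<in> carrier G" using x c N_car C_car by auto
  have "x \<notin> C" using N_C x x1 by blast
  then have ti: "C \<inter> conjugate_set G x C = {\<one>}" using C_ti xc by blast
  have "c = x \<otimes> c \<otimes> inv x" using e xc cc by (simp flip: e add: m_assoc)
  then have "c \<in> conjugate_set G x C" using conj_mem c by metis
  then show ?thesis using ti c by blast
qed


lemma conj_disj:
  assumes g: "g \<in> carrier G" and h: "h \<in> carrier G" and w1: "w \<in> conjugate_set G g C"
    and w2: "w \<in> conjugate_set G h C" and w: "w \<noteq> \<one>"
  shows "conjugate_set G g C = conjugate_set G h C"
proof -
  obtain c where c: "c \<in> C" "w = g \<otimes> c \<otimes> inv g" using w1 by (auto simp: conj_eq)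
  obtain c' where c': "c' \<in> C" "w = h \<otimes> c' \<otimes> inv h" using w2 by (auto simp: conj_eq)
  have cc: "c \<in> carrier G" "c' \<in> carrier G" using c c' C_car by auto
  define k where "k = inv g \<otimes> h"
  have kc: "k \<in> carrier G" using g h k_def by simp
  have "c = inv g \<otimes> w \<otimes> g" using c(2) g cc by (simp add: m_assoc)
  also have "\<dots> = k \<otimes> c' \<otimes> inv k" using c'(2) g h cc by (simp add: k_def m_assoc inv_mult_group)
  finally have ck: "c = k \<otimes> c' \<otimes> inv k" .
  have "c \<noteq> \<one>" using c(2) w g by auto
  moreover have "c \<in> conjugate_set G k C" using ck c'(1) conj_mem by metis
  ultimately have "k \<in> C" using C_ti[OF kc] c(1) by blast
  then have "conjugate_set G k C = C" using conj_self by blast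
  moreover have "h = g \<otimes> k" using g h by (simp add: k_def)
  ultimately show ?thesis using conj_comp[OF g kc C_car] by simp
qed

definition CS where "CS = subgroup_conj_class G C"

lemma CS_card: "card CS * card C = card (carrier G)"
proof -
  interpret A: group_action G "{H. H \<subseteq> carrier G}" "\<lambda>g. \<lambda>H \<in> {H. H \<subseteq> carrier G}. g <# H #> (inv g)"
    using action_by_conjugation_on_power_set .
  have "card (orbit G (\<lambda>g. \<lambda>H \<in> {H. H \<subseteq> carrier G}. g <# H #> (inv g)) C) *
        card (stabilizer G (\<lambda>g. \<lambda>H \<in> {H. H \<subseteq> carrier G}. g <# H #> (inv g)) C) = order G"
    using A.orbit_stabilizer_theorem C_car by blast
  moreover have "orbit G (\<lambda>g. \<lambda>H \<in> {H. H \<subseteq> carrier G}. g <# H #> (inv g)) C = CS"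
    unfolding orbit_def CS_def subgroup_conj_class_def conjugate_set_def using C_car by auto
  moreover have "stabilizer G (\<lambda>g. \<lambda>H \<in> {H. H \<subseteq> carrier G}. g <# H #> (inv g)) C = C"
    using normalizer_C unfolding normalizer_def .
  ultimately show ?thesis by (simp add: order_def)
qed

lemma card_GN: "card (carrier G) = card N * card C"
proof -
  let ?F = "(\<lambda>T. T - {\<one>}) ` CS"
  have one_in: "\<one> \<in> T" if TCS: "T \<in> CS" for T
  proof -
    obtain g where g: "g \<in> carrier G" "T = conjugate_set G g C"
      using TCS unfolding CS_def subgroup_conj_class_def by auto
    have "g \<otimes> \<one> \<otimes> inv g \<in> conjugate_set G g C" using subgroup.one_closed[OF C_sub] by (rule conj_mem)
    then show ?thesis using g by simp
  qed
  have finCS: "finite CS"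
  proof -
    have "CS \<subseteq> Pow (carrier G)" unfolding CS_def subgroup_conj_class_def using C_conj_car by auto
    moreover have "finite (Pow (carrier G))" using fin by simp
    ultimately show ?thesis by (rule finite_subset)
  qed
  have cardF: "card ?F = card CS"
  proof (rule card_image, rule inj_onI)
    fix T1 T2 assume "T1 \<in> CS" "T2 \<in> CS" "T1 - {\<one>} = T2 - {\<one>}"
    then show "T1 = T2" using one_in by blast
  qed
  have U: "\<Union> ?F = carrier G - N"
  proof
    show "\<Union> ?F \<subseteq> carrier G - N"
    proof
      fix x assume "x \<in> \<Union> ?F"
      then obtain g where g: "g \<in> carrier G" "x \<in> conjugate_set G g C" "x \<noteq> \<one>"
        unfolding CS_def subgroup_conj_class_def by auto
      then show "x \<in> carrier G - N" using C_conj_car N_conj_C by blast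
    qed
    show "carrier G - N \<subseteq> \<Union> ?F"
    proof
      fix x assume x: "x \<in> carrier G - N"
      then obtain g where "g \<in> carrier G" "x \<in> conjugate_set G g C" using notN by blast
      moreover have "x \<noteq> \<one>" using x one_N by blast
      ultimately show "x \<in> \<Union> ?F" unfolding CS_def subgroup_conj_class_def by blast
    qed
  qed
  have "(card C - 1) * card ?F = card (\<Union> ?F)"
  proof (rule card_partition)
    show "finite ?F" using finCS by simp
    show "finite (\<Union> ?F)" using U fin by simp
    show "card Y = card C - 1" if "Y \<in> ?F" for Y
    proof -
      from that obtain g where g: "g \<in> carrier G" "Y = conjugate_set G g C - {\<one>}" and
        "conjugate_set G g C \<in> CS"
        unfolding CS_def subgroup_conj_class_def by auto
      then have "\<one> \<in> conjugate_set G g C" using one_in by blast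
      moreover have "finite (conjugate_set G g C)" using C_conj_car[OF g(1)] fin finite_subset by blast
      ultimately show "card Y = card C - 1" using g conj_card[OF g(1) C_car] by simp
    qed
    show "Y1 \<inter> Y2 = {}" if Ys: "Y1 \<in> ?F" "Y2 \<in> ?F" "Y1 \<noteq> Y2" for Y1 Y2
    proof -
      from that obtain g h where g: "g \<in> carrier G" "Y1 = conjugate_set G g C - {\<one>}"
        and h: "h \<in> carrier G" "Y2 = conjugate_set G h C - {\<one>}"
        and ne: "Y1 \<noteq> Y2"
        unfolding CS_def subgroup_conj_class_def by auto
      show "Y1 \<inter> Y2 = {}"
      proof (rule ccontr)
        assume "Y1 \<inter> Y2 \<noteq> {}"
        then obtain w where "w \<in> conjugate_set G g C" "w \<in> conjugate_set G h C" "w \<noteq> \<one>"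
          using g h by blast
        then have "conjugate_set G g C = conjugate_set G h C" using conj_disj g h by blast
        then show False using ne g h by simp
      qed
    qed
  qed
  then have e1: "(card C - 1) * card CS = card (carrier G) - card N"
    using U cardF fin N_car by (simp add: card_Diff_subset finite_subset)
  have e2: "card CS * card C = card (carrier G)" using CS_card .
  have "card N \<le> card (carrier G)" using fin N_car card_mono by blast
  have "card C \<ge> 1" using subgroup.finite_imp_card_positive[OF C_sub fin] by simp
  have d: "(card C - 1) * card CS = card C * card CS - card CS" by (simp add: diff_mult_distrib)
  have "card CS \<le> card C * card CS" using \<open>card C \<ge> 1\<close> by simp
  then have le: "card CS \<le> card (carrier G)" using e2 by (metis mult.commute)
  have "card (carrier G) - card N = card (carrier G) - card CS" using e1 e2 d by (simp add: mult.commute)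
  then have "card N = card CS" using le \<open>card N \<le> card (carrier G)\<close> by linarith
  then show ?thesis using e2 by (simp add: mult.commute)
qed

lemma decomp_unique:
  assumes n: "n \<in> N" "n' \<in> N" and c: "c \<in> C" "c' \<in> C" and e: "n \<otimes> c = n' \<otimes> c'"
  shows "n = n' \<and> c = c'"
proof -
  have nc: "n \<in> carrier G" "n' \<in> carrier G" using n N_car by auto
  have cc: "c \<in> carrier G" "c' \<in> carrier G" using c C_car by auto
  have "n = n' \<otimes> c' \<otimes> inv c" using e nc cc inv_solve_right by (metis m_closed)
  then have x: "inv n' \<otimes> n = c' \<otimes> inv c" using nc cc by (simp add: m_assoc)
  have "inv n' \<otimes> n \<in> N" using n N_sub by (simp add: subgroup.m_closed subgroup.m_inv_closed)
  moreover have "c' \<otimes> inv c \<in> C" using c C_sub by (simp add: subgroup.m_closed subgroup.m_inv_closed)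
  ultimately have "inv n' \<otimes> n = \<one>" using x N_C by simp
  then have "n = n'" using nc by (metis inv_equality inv_inv inv_closed)
  moreover then have "c = c'" using e nc cc l_cancel by blast
  ultimately show ?thesis by simp
qed

lemma decomp_exists: assumes g: "g \<in> carrier G" shows "\<exists>n\<in>N. \<exists>c\<in>C. g = n \<otimes> c"
proof -
  let ?f = "\<lambda>(n, c). n \<otimes> c"
  have inj: "inj_on ?f (N \<times> C)"
    by (rule inj_onI) (use decomp_unique in auto)
  have sub: "?f ` (N \<times> C) \<subseteq> carrier G" using N_car C_car by auto
  have "card (?f ` (N \<times> C)) = card (carrier G)"
    using card_image[OF inj] card_GN by (simp add: card_cartesian_product)
  then have "?f ` (N \<times> C) = carrier G" using card_subset_eq[OF fin sub] by simp
  then show ?thesis using g by force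
qed

definition pr where "pr g = (THE c. c \<in> C \<and> (\<exists>n\<in>N. g = n \<otimes> c))"

lemma pr_char: assumes "n \<in> N" "c \<in> C" shows "pr (n \<otimes> c) = c"
  unfolding pr_def
proof (rule the_equality)
  show "c \<in> C \<and> (\<exists>n'\<in>N. n \<otimes> c = n' \<otimes> c)" using assms by blast
  show "c' = c" if "c' \<in> C \<and> (\<exists>n'\<in>N. n \<otimes> c = n' \<otimes> c')" for c'
    using that decomp_unique assms by metis
qed

lemma pr_in: assumes "g \<in> carrier G" shows "pr g \<in> C" and "\<exists>n\<in>N. g = n \<otimes> pr g"
  using decomp_exists[OF assms] pr_char by auto

lemma pr_mult: assumes g: "g \<in> carrier G" and h: "h \<in> carrier G" shows "pr (g \<otimes> h) = pr g \<otimes> pr h"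
proof -
  obtain n c where nc: "n \<in> N" "c \<in> C" "g = n \<otimes> c" using decomp_exists[OF g] by blast
  obtain n' c' where nc': "n' \<in> N" "c' \<in> C" "h = n' \<otimes> c'" using decomp_exists[OF h] by blast
  have car: "n \<in> carrier G" "c \<in> carrier G" "n' \<in> carrier G" "c' \<in> carrier G"
    using nc nc' N_car C_car by auto
  have "g \<otimes> h = (n \<otimes> (c \<otimes> n' \<otimes> inv c)) \<otimes> (c \<otimes> c')"
    using nc nc' car by (simp add: m_assoc)
  moreover have "n \<otimes> (c \<otimes> n' \<otimes> inv c) \<in> N"
    using N_normal[of c n'] car nc nc' N_sub by (simp add: subgroup.m_closed)
  moreover have "c \<otimes> c' \<in> C" using nc nc' C_sub by (simp add: subgroup.m_closed)
  ultimately have "pr (g \<otimes> h) = c \<otimes> c'" using pr_char by simp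
  moreover have "pr g = c" "pr h = c'" using nc nc' pr_char by auto
  ultimately show ?thesis by simp
qed

lemma pr_N: "x \<in> N \<Longrightarrow> pr x = \<one>"
  using pr_char[of x \<one>] subgroup.one_closed[OF C_sub] N_car by auto

lemma pr_C: "c \<in> C \<Longrightarrow> pr c = c"
  using pr_char[of \<one> c] one_N C_car by auto

lemma pr_one_N: assumes "x \<in> carrier G" "pr x = \<one>" shows "x \<in> N"
proof -
  obtain n where "n \<in> N" "x = n \<otimes> pr x" using pr_in[OF assms(1)] by blast
  then show ?thesis using assms N_car by auto
qed

lemma pr_car: "g \<in> carrier G \<Longrightarrow> pr g \<in> carrier G"
  using pr_in C_car by blast

lemma pr_inv: assumes g: "g \<in> carrier G" shows "pr (inv g) = inv (pr g)"
proof -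
  have "pr (inv g) \<otimes> pr g = \<one>" using pr_mult[of "inv g" g] g pr_N one_N by simp
  then show ?thesis using g pr_car by (simp add: inv_equality)
qed

lemma pr_conj: assumes x: "x \<in> carrier G" and c: "c \<in> C" shows "pr (x \<otimes> c \<otimes> inv x) = c"
proof -
  have cc: "c \<in> carrier G" using c C_car by blast
  have "pr (x \<otimes> c \<otimes> inv x) = pr x \<otimes> c \<otimes> inv (pr x)"
    using pr_mult x cc pr_C[OF c] pr_inv by simp
  also have "\<dots> = c \<otimes> pr x \<otimes> inv (pr x)" using C_comm[OF pr_in(1)[OF x] c] by simp
  also have "\<dots> = c" using cc pr_car[OF x] by (simp add: m_assoc)
  finally show ?thesis .
qed

lemma pr_pow: "x \<in> carrier G \<Longrightarrow> pr (x [^] (k::nat)) = pr x [^] k"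
  by (induction k) (simp_all add: pr_mult pr_N one_N)

definition Np where "Np i = {y \<in> N. y [^] (p ^ i) = \<one>}"
definition Cp where "Cp j = {y \<in> C. y [^] (q ^ j) = \<one>}"

lemma Np_sub: "i \<le> a \<Longrightarrow> subgroup (Np i) G"
  and Np_card: "i \<le> a \<Longrightarrow> card (Np i) = p ^ i"
  using cyc_pow_subgroup[OF fin N_sub cycN cardN pp] unfolding Np_def by auto

lemma Cp_sub: "j \<le> m \<Longrightarrow> subgroup (Cp j) G"
  and Cp_card: "j \<le> m \<Longrightarrow> card (Cp j) = q ^ j"
  using cyc_pow_subgroup[OF fin C_sub cycC cardC qp] unfolding Cp_def by auto

lemma Np_N: "Np i \<subseteq> N" and Cp_C: "Cp j \<subseteq> C" unfolding Np_def Cp_def by auto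

lemma sub_Np: "subgroup S G \<Longrightarrow> S \<subseteq> N \<Longrightarrow> \<exists>i\<le>a. S = Np i"
  using cyc_subgroup_eq[OF fin N_sub cycN cardN pp] unfolding Np_def by auto

lemma sub_Cp: "subgroup S G \<Longrightarrow> S \<subseteq> C \<Longrightarrow> \<exists>j\<le>m. S = Cp j"
  using cyc_subgroup_eq[OF fin C_sub cycC cardC qp] unfolding Cp_def by auto

lemma Np_normal: assumes g: "g \<in> carrier G" and y: "y \<in> Np i" shows "g \<otimes> y \<otimes> inv g \<in> Np i"
proof -
  have yN: "y \<in> N" and y1: "y [^] (p ^ i) = \<one>" using y unfolding Np_def by auto
  have yc: "y \<in> carrier G" using yN N_car by blast
  have "(g \<otimes> y \<otimes> inv g) [^] (p ^ i) = \<one>" using conj_pow[OF g yc] y1 g by simp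
  then show ?thesis using N_normal[OF g yN] unfolding Np_def by simp
qed

lemma Np_car: "Np i \<subseteq> carrier G" using Np_N N_car by blast
lemma Cp_car: "Cp j \<subseteq> carrier G" using Cp_C C_car by blast

lemma Cp_gen: assumes "j \<le> m" shows "\<exists>w\<in>carrier G. Cp j = {w [^] k | k. k \<in> (UNIV :: nat set)}"
proof -
  have "\<exists>w\<in>carrier G. {y \<in> C. y [^] (q ^ j) = \<one>} = {w [^] k | k. k \<in> (UNIV :: nat set)}"
    using cyc_pow_gen[OF fin C_sub cycC cardC qp assms] .
  then show ?thesis unfolding Cp_def .
qed

definition P where "P i j = (\<lambda>(n, c). n \<otimes> c) ` (Np i \<times> Cp j)"

lemma P_mem: "x \<in> P i j \<longleftrightarrow> (\<exists>n\<in>Np i. \<exists>c\<in>Cp j. x = n \<otimes> c)"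
  unfolding P_def by auto

lemma P_car: "P i j \<subseteq> carrier G"
  using Np_car Cp_car unfolding P_def by (auto intro!: m_closed)

lemma P_sub: assumes ij: "i \<le> a" "j \<le> m" shows "subgroup (P i j) G"
proof (rule subgroupI)
  show "P i j \<subseteq> carrier G" by (rule P_car)
  show "P i j \<noteq> {}" using subgroup.one_closed[OF Np_sub[OF ij(1)]] subgroup.one_closed[OF Cp_sub[OF ij(2)]]
    unfolding P_def by blast
next
  fix x assume "x \<in> P i j"
  then obtain n c where nc: "n \<in> Np i" "c \<in> Cp j" "x = n \<otimes> c" by (auto simp: P_mem)
  have car: "n \<in> carrier G" "c \<in> carrier G" using nc Np_car Cp_car by auto
  have "inv x = (inv c \<otimes> inv n \<otimes> inv (inv c)) \<otimes> inv c"
    using nc car by (simp add: m_assoc inv_mult_group)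
  moreover have "inv c \<otimes> inv n \<otimes> inv (inv c) \<in> Np i"
    using Np_normal[of "inv c" "inv n" i] car nc subgroup.m_inv_closed[OF Np_sub[OF ij(1)]] by simp
  moreover have "inv c \<in> Cp j" using nc subgroup.m_inv_closed[OF Cp_sub[OF ij(2)]] by simp
  ultimately show "inv x \<in> P i j" by (auto simp: P_mem)
next
  fix x y assume "x \<in> P i j" "y \<in> P i j"
  then obtain n c n' c' where nc: "n \<in> Np i" "c \<in> Cp j" "x = n \<otimes> c"
    and nc': "n' \<in> Np i" "c' \<in> Cp j" "y = n' \<otimes> c'" by (auto simp: P_mem)
  have car: "n \<in> carrier G" "c \<in> carrier G" "n' \<in> carrier G" "c' \<in> carrier G"
    using nc nc' Np_car Cp_car by auto
  have "x \<otimes> y = (n \<otimes> (c \<otimes> n' \<otimes> inv c)) \<otimes> (c \<otimes> c')"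
    using nc nc' car by (simp add: m_assoc)
  moreover have "n \<otimes> (c \<otimes> n' \<otimes> inv c) \<in> Np i"
    using Np_normal[of c n' i] car nc nc' subgroup.m_closed[OF Np_sub[OF ij(1)]] by simp
  moreover have "c \<otimes> c' \<in> Cp j" using nc nc' subgroup.m_closed[OF Cp_sub[OF ij(2)]] by simp
  ultimately show "x \<otimes> y \<in> P i j" by (auto simp: P_mem)
qed

lemma P_card: assumes ij: "i \<le> a" "j \<le> m" shows "card (P i j) = p ^ i * q ^ j"
proof -
  have "inj_on (\<lambda>(n, c). n \<otimes> c) (Np i \<times> Cp j)"
  proof (rule inj_onI)
    fix u v assume u: "u \<in> Np i \<times> Cp j" and v: "v \<in> Np i \<times> Cp j"
      and e: "(case u of (n, c) \<Rightarrow> n \<otimes> c) = (case v of (n, c) \<Rightarrow> n \<otimes> c)"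
    obtain n c where u': "u = (n, c)" "n \<in> N" "c \<in> C" using u Np_N Cp_C by blast
    obtain n' c' where v': "v = (n', c')" "n' \<in> N" "c' \<in> C" using v Np_N Cp_C by blast
    have "n \<otimes> c = n' \<otimes> c'" using e u' v' by simp
    then show "u = v" using decomp_unique[OF u'(2) v'(2) u'(3) v'(3)] u' v' by simp
  qed
  then show ?thesis unfolding P_def using card_image Np_card[OF ij(1)] Cp_card[OF ij(2)]
    by (metis card_cartesian_product)
qed

lemma pr_P_in: assumes "x \<in> P i j" shows "pr x \<in> Cp j"
proof -
  obtain n c where nc: "n \<in> Np i" "c \<in> Cp j" "x = n \<otimes> c" using assms by (auto simp: P_mem)
  have "pr x = c" using nc pr_char[of n c] Np_N Cp_C by auto
  then show ?thesis using nc by simp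
qed

lemma P_int_N: "x \<in> P i j \<Longrightarrow> x \<in> N \<Longrightarrow> x \<in> Np i"
proof -
  assume x: "x \<in> P i j" "x \<in> N"
  then obtain n c where nc: "n \<in> Np i" "c \<in> Cp j" "x = n \<otimes> c" by (auto simp: P_mem)
  have "pr x = c" using nc pr_char[of n c] Np_N Cp_C by auto
  then have "c = \<one>" using pr_N x by simp
  moreover have "n \<in> carrier G" using nc Np_car by blast
  ultimately show ?thesis using nc by simp
qed

lemma Cp_in_P: assumes "i \<le> a" "c \<in> Cp j" shows "c \<in> P i j"
proof -
  have "\<one> \<in> Np i" using subgroup.one_closed[OF Np_sub[OF assms(1)]] .
  moreover have "c \<in> carrier G" using assms(2) Cp_car by blast
  then have "c = \<one> \<otimes> c" by simp
  ultimately show ?thesis using assms(2) unfolding P_mem by blast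
qed

lemma Np_in_P: assumes "j \<le> m" "n \<in> Np i" shows "n \<in> P i j"
proof -
  have "\<one> \<in> Cp j" using subgroup.one_closed[OF Cp_sub[OF assms(1)]] .
  moreover have "n \<in> carrier G" using assms(2) Np_car by blast
  then have "n = n \<otimes> \<one>" by simp
  ultimately show ?thesis using assms(2) unfolding P_mem by blast
qed

lemma classify:
  assumes H: "subgroup H G"
  shows "\<exists>i\<le>a. \<exists>j\<le>m. \<exists>x\<in>carrier G. H = conjugate_set G x (P i j)"
proof -
  have Hc: "H \<subseteq> carrier G" using H subgroup.subset by blast
  obtain i where i: "i \<le> a" "H \<inter> N = Np i"
    using sub_Np[of "H \<inter> N"] subgroups_Inter_pair[OF H N_sub] by blast
  have Tsub: "subgroup (pr ` H) G"
  proof (rule subgroupI)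
    show "pr ` H \<subseteq> carrier G" using pr_car Hc by blast
    show "pr ` H \<noteq> {}" using subgroup.one_closed[OF H] by blast
  next
    fix y assume "y \<in> pr ` H"
    then obtain h where h: "h \<in> H" "y = pr h" by (auto simp: image_iff)
    have hc: "h \<in> carrier G" using h(1) Hc by (rule subsetD[rotated])
    have "inv y = pr (inv h)" using pr_inv[OF hc] h(2) by simp
    moreover have "inv h \<in> H" using subgroup.m_inv_closed[OF H h(1)] .
    ultimately show "inv y \<in> pr ` H" by simp
  next
    fix y y' assume "y \<in> pr ` H" "y' \<in> pr ` H"
    then obtain h h' where h: "h \<in> H" "y = pr h" "h' \<in> H" "y' = pr h'" by (auto simp: image_iff)
    have hc: "h \<in> carrier G" "h' \<in> carrier G" using h(1,3) Hc by auto
    have "y \<otimes> y' = pr (h \<otimes> h')" using pr_mult[OF hc] h by simp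
    moreover have "h \<otimes> h' \<in> H" using subgroup.m_closed[OF H h(1) h(3)] .
    ultimately show "y \<otimes> y' \<in> pr ` H" by simp
  qed
  have "pr ` H \<subseteq> C" using pr_in(1) Hc by auto
  then obtain j where j: "j \<le> m" "pr ` H = Cp j"
    using sub_Cp[OF Tsub] by blast
  obtain w where w: "w \<in> carrier G" "Cp j = {w [^] k | k. k \<in> (UNIV :: nat set)}"
    using Cp_gen[OF j(1)] by blast
  have "w [^] (1::nat) \<in> {w [^] k | k. k \<in> (UNIV :: nat set)}" by blast
  then have wCp: "w \<in> Cp j" using w by simp
  then have "w \<in> pr ` H" using j(2) by simp
  then obtain h where h: "h \<in> H" "pr h = w" by (auto simp: image_iff)
  have hc: "h \<in> carrier G" using h Hc by blast
  obtain x where x: "x \<in> carrier G" "\<forall>c\<in>Cp j. x \<otimes> c \<otimes> inv x \<in> H"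
  proof (cases "h \<in> N")
    case True
    then have "w = \<one>" using h pr_N by simp
    then have "Cp j = {\<one>}" using w(2) by simp
    then show ?thesis using that[of \<one>] subgroup.one_closed[OF H] by simp
  next
    case False
    then obtain x where x: "x \<in> carrier G" "h \<in> conjugate_set G x C" using notN hc by blast
    then obtain c where c: "c \<in> C" "h = x \<otimes> c \<otimes> inv x" by (auto simp: conj_eq)
    have "c = w" using pr_conj[OF x(1) c(1)] c h by simp
    have "x \<otimes> y \<otimes> inv x \<in> H" if "y \<in> Cp j" for y
    proof -
      have "y \<in> {w [^] k | k. k \<in> (UNIV :: nat set)}" using that w(2) by simp
      then obtain k :: nat where "y = w [^] k" by auto
      then have "x \<otimes> y \<otimes> inv x = h [^] k"
        using conj_pow[OF x(1) w(1)] c \<open>c = w\<close> by simp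
      then show ?thesis using subgroup_nat_pow_closed[OF H h(1)] by simp
    qed
    then show ?thesis using that[OF x(1)] by blast
  qed
  have "H = conjugate_set G x (P i j)"
  proof
    show "H \<subseteq> conjugate_set G x (P i j)"
    proof
      fix y assume y: "y \<in> H"
      have yc: "y \<in> carrier G" using y Hc by blast
      define c where "c = pr y"
      have "c \<in> pr ` H" using y c_def by simp
      then have c: "c \<in> Cp j" using j(2) by simp
      have cC: "c \<in> C" using c Cp_C by (rule subsetD[rotated])
      have cc: "c \<in> carrier G" using cC C_car by (rule subsetD[rotated])
      define k where "k = x \<otimes> c \<otimes> inv x"
      have kH: "k \<in> H" using x(2) c unfolding k_def by blast
      have kc: "k \<in> carrier G" using k_def x(1) cc by simp
      have prk: "pr k = c" unfolding k_def using pr_conj[OF x(1) cC] .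
      have "pr (y \<otimes> inv k) = pr y \<otimes> pr (inv k)" using pr_mult[OF yc] kc by simp
      also have "\<dots> = c \<otimes> inv c" using pr_inv[OF kc] prk c_def by simp
      also have "\<dots> = \<one>" using cc by simp
      finally have "pr (y \<otimes> inv k) = \<one>" .
      moreover have "y \<otimes> inv k \<in> H" using subgroup.m_closed[OF H y subgroup.m_inv_closed[OF H kH]] .
      moreover have "y \<otimes> inv k \<in> carrier G" using yc kc by simp
      ultimately have "y \<otimes> inv k \<in> H \<inter> N" using pr_one_N by blast
      then have n: "y \<otimes> inv k \<in> Np i" using i by simp
      have nc: "y \<otimes> inv k \<in> carrier G" using yc kc by simp
      define n' where "n' = inv x \<otimes> (y \<otimes> inv k) \<otimes> inv (inv x)"
      have n': "n' \<in> Np i" unfolding n'_def using Np_normal[OF inv_closed[OF x(1)] n] .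
      have n'c: "n' \<in> carrier G" using n' Np_car by blast
      have "y = (y \<otimes> inv k) \<otimes> k" using yc kc by (simp add: m_assoc)
      also have "\<dots> = x \<otimes> (n' \<otimes> c) \<otimes> inv x"
        using x(1) nc cc by (simp add: n'_def k_def m_assoc)
      finally have "y = x \<otimes> (n' \<otimes> c) \<otimes> inv x" .
      moreover have "n' \<otimes> c \<in> P i j" using n' c by (auto simp: P_mem)
      ultimately show "y \<in> conjugate_set G x (P i j)" using conj_mem[of "n' \<otimes> c" "P i j" x] by simp
    qed
    show "conjugate_set G x (P i j) \<subseteq> H"
    proof
      fix y assume "y \<in> conjugate_set G x (P i j)"
      then obtain n c where nc: "n \<in> Np i" "c \<in> Cp j" "y = x \<otimes> (n \<otimes> c) \<otimes> inv x"
        by (auto simp: conj_eq P_mem)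
      have car: "n \<in> carrier G" "c \<in> carrier G" using nc Np_car Cp_car by auto
      have "y = (x \<otimes> n \<otimes> inv x) \<otimes> (x \<otimes> c \<otimes> inv x)" using nc car x(1) by (simp add: m_assoc)
      moreover have "x \<otimes> n \<otimes> inv x \<in> H" using Np_normal[OF x(1) nc(1)] i(2) by blast
      moreover have "x \<otimes> c \<otimes> inv x \<in> H" using x(2) nc(2) by blast
      ultimately show "y \<in> H" using subgroup.m_closed[OF H] by simp
    qed
  qed
  then show ?thesis using i(1) j(1) x(1) by blast
qed

lemma Cp_m: "Cp m = C"
proof -
  have finC: "finite C" using fin C_car finite_subset by blast
  show ?thesis unfolding Cp_def using subgroup_pow_card[OF C_sub finC] cardC by auto
qed

lemma Np_0: "Np 0 = {\<one>}"
  unfolding Np_def using one_N N_car by auto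

lemma Cp_0: "Cp 0 = {\<one>}"
  unfolding Cp_def using subgroup.one_closed[OF C_sub] C_car by auto

lemma P_00: "P 0 0 = {\<one>}"
  unfolding P_def Np_0 Cp_0 by simp

lemma P_not_selfnorm: assumes i: "i \<le> a" and j: "j < m" shows "normalizer G (P i j) \<noteq> P i j"
proof -
  have jm: "j \<le> m" using j by simp
  have "card (Cp j) < card C" using Cp_card[OF jm] cardC j prime_gt_1_nat[OF qp]
    by (simp add: power_strict_increasing)
  then obtain c where c: "c \<in> C" "c \<notin> Cp j" using Cp_C by (metis card_mono fin C_car finite_subset not_le subsetI)
  have cc: "c \<in> carrier G" using c C_car by blast
  have Pc: "P i j \<subseteq> carrier G" by (rule P_car)
  have sub: "conjugate_set G c (P i j) \<subseteq> P i j"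
  proof
    fix y assume "y \<in> conjugate_set G c (P i j)"
    then obtain n c' where nc: "n \<in> Np i" "c' \<in> Cp j" "y = c \<otimes> (n \<otimes> c') \<otimes> inv c"
      by (auto simp: conj_eq P_mem)
    have car: "n \<in> carrier G" "c' \<in> carrier G" using nc Np_car Cp_car by auto
    have c'C: "c' \<in> C" using nc(2) Cp_C by blast
    have "y = (c \<otimes> n \<otimes> inv c) \<otimes> (c \<otimes> c' \<otimes> inv c)" using nc car cc by (simp add: m_assoc)
    also have "c \<otimes> c' \<otimes> inv c = c'" using C_comm[OF c(1) c'C] car cc by (simp add: m_assoc)
    finally have "y = (c \<otimes> n \<otimes> inv c) \<otimes> c'" .
    moreover have "c \<otimes> n \<otimes> inv c \<in> Np i" using Np_normal[OF cc nc(1)] .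
    ultimately show "y \<in> P i j" using nc(2) by (auto simp: P_mem)
  qed
  have "finite (P i j)" using Pc fin finite_subset by blast
  then have "conjugate_set G c (P i j) = P i j" using card_subset_eq[OF _ sub] conj_card[OF cc Pc] by simp
  then have "c \<in> normalizer G (P i j)" using normalizer_iff[OF Pc] cc by blast
  moreover have "c \<notin> P i j"
  proof
    assume "c \<in> P i j"
    then have "pr c \<in> Cp j" by (rule pr_P_in)
    then show False using pr_C[OF c(1)] c(2) by simp
  qed
  ultimately show ?thesis by blast
qed

lemma P_selfnorm: assumes i: "i \<le> a" shows "normalizer G (P i m) = P i m"
proof
  have Pc: "P i m \<subseteq> carrier G" by (rule P_car)
  have PS: "subgroup (P i m) G" using P_sub[OF i] by simp
  show "P i m \<subseteq> normalizer G (P i m)" using subgroup_in_normalizer[OF PS] .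
  show "normalizer G (P i m) \<subseteq> P i m"
  proof
    fix g assume "g \<in> normalizer G (P i m)"
    then have g: "g \<in> carrier G" "conjugate_set G g (P i m) = P i m" using normalizer_iff[OF Pc] by auto
    obtain n c where nc: "n \<in> N" "c \<in> C" "g = n \<otimes> c" using decomp_exists[OF g(1)] by blast
    have car: "n \<in> carrier G" "c \<in> carrier G" using nc N_car C_car by auto
    obtain c1 where c1: "c1 \<in> C" "c1 \<noteq> \<one>" using C_ne subgroup.one_closed[OF C_sub] by blast
    have c1c: "c1 \<in> carrier G" using c1 C_car by blast
    have c1P: "c1 \<in> P i m" using Cp_in_P[OF i] c1(1) Cp_m by simp
    have "g \<otimes> c1 \<otimes> inv g \<in> P i m" using conj_mem[OF c1P, of g] g(2) by simp
    moreover have "g \<otimes> c1 \<otimes> inv g = n \<otimes> (c \<otimes> c1 \<otimes> inv c) \<otimes> inv n"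
      using nc car c1c by (simp add: m_assoc inv_mult_group)
    moreover have "c \<otimes> c1 \<otimes> inv c = c1" using C_comm[OF nc(2) c1(1)] car c1c by (simp add: m_assoc)
    ultimately have e: "n \<otimes> c1 \<otimes> inv n \<in> P i m" by simp
    define z where "z = n \<otimes> c1 \<otimes> inv n \<otimes> inv c1"
    have zc: "z \<in> carrier G" using z_def car c1c by simp
    have "z \<in> P i m" unfolding z_def
      using subgroup.m_closed[OF PS e subgroup.m_inv_closed[OF PS c1P]] .
    moreover have "pr z = \<one>"
    proof -
      have "pr z = pr (n \<otimes> c1 \<otimes> inv n) \<otimes> pr (inv c1)" unfolding z_def
        using pr_mult car c1c by simp
      also have "\<dots> = c1 \<otimes> inv c1" using pr_conj[OF car(1) c1(1)] pr_inv[OF c1c] pr_C[OF c1(1)] by simp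
      finally show ?thesis using c1c by simp
    qed
    ultimately have zN: "z \<in> Np i" using P_int_N pr_one_N[OF zc] by blast
    define u where "u = inv n"
    have uN: "u \<in> N" using u_def nc(1) subgroup.m_inv_closed[OF N_sub] by simp
    have uc: "u \<in> carrier G" using u_def car by simp
    have zN': "z \<in> N" using zN Np_N by blast
    have zpow: "z [^] (p ^ i) = \<one>" using zN unfolding Np_def by simp
    have "c1 \<otimes> u \<otimes> inv c1 = u \<otimes> z"
      unfolding z_def u_def using car c1c by (simp add: m_assoc)
    then have "(c1 \<otimes> u \<otimes> inv c1) [^] (p ^ i) = (u \<otimes> z) [^] (p ^ i)" by simp
    also have "\<dots> = u [^] (p ^ i) \<otimes> z [^] (p ^ i)"
      using pow_mult_distrib[OF N_comm[OF uN zN'] uc zc] .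
    also have "\<dots> = u [^] (p ^ i)" using zpow uc by simp
    finally have "c1 \<otimes> u [^] (p ^ i) \<otimes> inv c1 = u [^] (p ^ i)" using conj_pow[OF c1c uc] by simp
    then have comm: "c1 \<otimes> u [^] (p ^ i) = u [^] (p ^ i) \<otimes> c1"
      using c1c uc by (metis inv_solve_right' nat_pow_closed m_closed)
    have vN: "u [^] (p ^ i) \<in> N" using subgroup_nat_pow_closed[OF N_sub uN] .
    have "u [^] (p ^ i) = \<one>" using fpf[OF c1(1) vN comm] c1(2) by blast
    then have "u \<in> Np i" using uN unfolding Np_def by simp
    then have "n \<in> Np i" using u_def car Np_sub[OF i] subgroup.m_inv_closed by fastforce
    moreover have "c \<in> Cp m" using nc(2) Cp_m by simp
    ultimately show "g \<in> P i m" using nc(3) by (auto simp: P_mem)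
  qed
qed

lemma p_ne_q: "p \<noteq> q"
proof
  assume pq: "p = q"
  define Orb where "Orb z = (\<lambda>c. c \<otimes> z \<otimes> inv c) ` C" for z
  let ?F = "Orb ` (N - {\<one>})"
  have Osub: "Orb z2 \<subseteq> Orb z1" if z1: "z1 \<in> N" and d: "d \<in> C" and z2: "z2 = d \<otimes> z1 \<otimes> inv d" for z1 z2 d
  proof
    fix y assume "y \<in> Orb z2"
    then obtain c where c: "c \<in> C" "y = c \<otimes> z2 \<otimes> inv c" unfolding Orb_def by auto
    have car: "c \<in> carrier G" "d \<in> carrier G" "z1 \<in> carrier G" using c d z1 C_car N_car by auto
    have "y = (c \<otimes> d) \<otimes> z1 \<otimes> inv (c \<otimes> d)" using c z2 car by (simp add: m_assoc inv_mult_group)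
    moreover have "c \<otimes> d \<in> C" using subgroup.m_closed[OF C_sub c(1) d] .
    ultimately show "y \<in> Orb z1" unfolding Orb_def by blast
  qed
  have Oin: "Orb z \<subseteq> N - {\<one>}" if z: "z \<in> N - {\<one>}" for z
  proof
    fix y assume "y \<in> Orb z"
    then obtain c where c: "c \<in> C" "y = c \<otimes> z \<otimes> inv c" unfolding Orb_def by auto
    have car: "c \<in> carrier G" "z \<in> carrier G" using c z C_car N_car by auto
    have "y \<in> N" using N_normal[OF car(1)] z c by simp
    moreover have "y \<noteq> \<one>"
    proof
      assume "y = \<one>"
      have "inv c \<otimes> y \<otimes> c = inv c \<otimes> (c \<otimes> z \<otimes> inv c) \<otimes> c" using c by simp
      also have "\<dots> = z" using car by (simp add: m_assoc)
      finally have "z = inv c \<otimes> y \<otimes> c" by simp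
      then show False using \<open>y = \<one>\<close> z car by simp
    qed
    ultimately show "y \<in> N - {\<one>}" by simp
  qed
  have zO: "z \<in> Orb z" if "z \<in> N" for z
  proof -
    have "z \<in> carrier G" using that N_car by blast
    then have "z = \<one> \<otimes> z \<otimes> inv \<one>" by simp
    then show ?thesis unfolding Orb_def using subgroup.one_closed[OF C_sub] by blast
  qed
  have U: "\<Union> ?F = N - {\<one>}" using Oin zO by blast
  have "card C * card ?F = card (\<Union> ?F)"
  proof (rule card_partition)
    have finN: "finite N" using finite_subset[OF N_car fin] .
    show "finite ?F" using finN by simp
    show "finite (\<Union> ?F)" using U finN by simp
    show "card Y = card C" if Y: "Y \<in> ?F" for Y
    proof -
      obtain z where z: "z \<in> N - {\<one>}" "Y = Orb z" using Y by blast
      have zc: "z \<in> carrier G" using z N_car by blast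
      have "inj_on (\<lambda>c. c \<otimes> z \<otimes> inv c) C"
      proof (rule inj_onI)
        fix c c' assume c: "c \<in> C" "c' \<in> C" and e: "c \<otimes> z \<otimes> inv c = c' \<otimes> z \<otimes> inv c'"
        have car: "c \<in> carrier G" "c' \<in> carrier G" using c C_car by auto
        define d where "d = inv c' \<otimes> c"
        have dC: "d \<in> C" using d_def c subgroup.m_closed[OF C_sub] subgroup.m_inv_closed[OF C_sub] by simp
        have dc: "d \<in> carrier G" using d_def car by simp
        have "d \<otimes> z \<otimes> inv d = z"
        proof -
          have "d \<otimes> z \<otimes> inv d = inv c' \<otimes> (c \<otimes> z \<otimes> inv c) \<otimes> c'"
            using car zc by (simp add: d_def m_assoc inv_mult_group)
          also have "\<dots> = z" using e car zc by (simp add: m_assoc)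
          finally show ?thesis .
        qed
        then have "d \<otimes> z = z \<otimes> d" using inv_solve_right'[of z "d \<otimes> z" d] dc zc by simp
        then have "d = \<one>" using fpf[OF dC] z by blast
        then show "c = c'" using d_def inv_solve_left'[of \<one> c' c] car by simp
      qed
      then show ?thesis using z(2) card_image unfolding Orb_def by blast
    qed
    show "Y1 \<inter> Y2 = {}" if Ys: "Y1 \<in> ?F" "Y2 \<in> ?F" "Y1 \<noteq> Y2" for Y1 Y2
    proof (rule ccontr)
      assume ne: "Y1 \<inter> Y2 \<noteq> {}"
      obtain z1 z2 where z: "z1 \<in> N - {\<one>}" "Y1 = Orb z1" "z2 \<in> N - {\<one>}" "Y2 = Orb z2" using Ys(1,2) by blast
      obtain y where y: "y \<in> Orb z1" "y \<in> Orb z2" using ne z by blast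
      obtain c1 where c1: "c1 \<in> C" "y = c1 \<otimes> z1 \<otimes> inv c1" using y(1) unfolding Orb_def by auto
      obtain c2 where c2: "c2 \<in> C" "y = c2 \<otimes> z2 \<otimes> inv c2" using y(2) unfolding Orb_def by auto
      have car: "c1 \<in> carrier G" "c2 \<in> carrier G" "z1 \<in> carrier G" "z2 \<in> carrier G"
        using c1 c2 z C_car N_car by auto
      define d where "d = inv c2 \<otimes> c1"
      have dC: "d \<in> C" using d_def c1 c2 subgroup.m_closed[OF C_sub] subgroup.m_inv_closed[OF C_sub] by simp
      have dc: "d \<in> carrier G" using d_def car by simp
      have e2: "z2 = d \<otimes> z1 \<otimes> inv d"
      proof -
        have "z2 = inv c2 \<otimes> y \<otimes> c2" using c2 car by (simp add: m_assoc)
        also have "\<dots> = d \<otimes> z1 \<otimes> inv d" using c1 car by (simp add: d_def m_assoc inv_mult_group)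
        finally show ?thesis .
      qed
      have e1: "z1 = inv d \<otimes> z2 \<otimes> inv (inv d)" using e2 dc car by (simp add: m_assoc)
      have "Orb z2 \<subseteq> Orb z1" using Osub[of z1 d z2] z dC e2 by blast
      moreover have "Orb z1 \<subseteq> Orb z2" using Osub[of z2 "inv d" z1] z dC e1
          subgroup.m_inv_closed[OF C_sub dC] by blast
      ultimately show False using z Ys(3) by blast
    qed
  qed
  then have "q ^ m * card ?F = p ^ a - 1" using U cardC cardN one_N
    by (simp add: card_Diff_singleton)
  moreover have "p dvd q ^ m" using pq m1 by (cases m) simp_all
  ultimately have d1: "p dvd p ^ a - 1" by (metis dvd_mult2)
  have d2: "p dvd p ^ a" using a1 by (cases a) simp_all
  have "p ^ a \<ge> 1" using prime_gt_0_nat[OF pp] by simp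
  then have "p ^ a - (p ^ a - 1) = 1" by simp
  then have "p dvd 1" using dvd_diff_nat[OF d2 d1] by simp
  then show False using pp by simp
qed

lemma mult_pq: "multiplicity p (p ^ i * q ^ j) = i" and mult_qp: "multiplicity q (p ^ i * q ^ j) = j"
proof -
  have pne: "p \<noteq> q" by (rule p_ne_q)
  have p0: "p ^ i \<noteq> 0" "q ^ j \<noteq> 0" using prime_gt_0_nat[OF pp] prime_gt_0_nat[OF qp] by auto
  have pe: "prime_elem p" "prime_elem q" using pp qp by auto
  show "multiplicity p (p ^ i * q ^ j) = i"
    using prime_elem_multiplicity_mult_distrib[OF pe(1) p0] multiplicity_prime_power[OF pe(1)]
      multiplicity_distinct_prime_power[OF pp qp pne] by simp
  show "multiplicity q (p ^ i * q ^ j) = j"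
    using prime_elem_multiplicity_mult_distrib[OF pe(2) p0] multiplicity_prime_power[OF pe(2)]
      multiplicity_distinct_prime_power[OF qp pp pne[symmetric]] by simp
qed

lemma pq_eq: assumes e: "p ^ i * q ^ j = p ^ i' * q ^ j'" shows "i = i' \<and> j = j'"
proof
  have "i = multiplicity p (p ^ i * q ^ j)" by (simp only: mult_pq)
  also have "\<dots> = multiplicity p (p ^ i' * q ^ j')" by (simp only: e)
  also have "\<dots> = i'" by (simp only: mult_pq)
  finally show "i = i'" .
  have "j = multiplicity q (p ^ i * q ^ j)" by (simp only: mult_qp)
  also have "\<dots> = multiplicity q (p ^ i' * q ^ j')" by (simp only: e)
  also have "\<dots> = j'" by (simp only: mult_qp)
  finally show "j = j'" .
qed

lemma self_class: assumes "K \<subseteq> carrier G" shows "K \<in> subgroup_conj_class G K"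
proof -
  have "K = conjugate_set G \<one> K" using conj_one[OF assms] by simp
  then have "\<exists>g. K = conjugate_set G g K \<and> g \<in> carrier G" by blast
  then show ?thesis unfolding subgroup_conj_class_def by simp
qed

lemma main_count: "D_count G = (a + 1) * m - 1"
proof -
  define Sset where "Sset = {H. subgroup H G \<and> H \<noteq> {\<one>} \<and> normalizer G H \<noteq> H}"
  define T where "T = ({..a} \<times> {..<m}) - {(0, 0)}"
  define f where "f = (\<lambda>(i, j). subgroup_conj_class G (P i j))"
  have inj: "inj_on f T"
  proof (rule inj_onI)
    fix u v assume u: "u \<in> T" and v: "v \<in> T" and e: "f u = f v"
    obtain i j where ij: "u = (i, j)" by (cases u)
    obtain i' j' where ij': "v = (i', j')" by (cases v)
    have le: "i \<le> a" "j \<le> m" "i' \<le> a" "j' \<le> m" using u v ij ij' T_def by auto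
    have e': "subgroup_conj_class G (P i j) = subgroup_conj_class G (P i' j')"
      using e unfolding f_def ij ij' by simp
    have "P i j \<in> subgroup_conj_class G (P i' j')"
      using self_class[OF P_car, of i j] unfolding e' .
    then obtain g where g: "g \<in> carrier G" "P i j = conjugate_set G g (P i' j')"
      unfolding subgroup_conj_class_def by auto
    then have "card (P i j) = card (P i' j')" using conj_card[OF g(1) P_car] by simp
    then have "p ^ i * q ^ j = p ^ i' * q ^ j'" using P_card le by simp
    then have "i = i' \<and> j = j'" by (rule pq_eq)
    then show "u = v" using ij ij' by simp
  qed
  have img: "f ` T = subgroup_conj_class G ` Sset"
  proof
    show "f ` T \<subseteq> subgroup_conj_class G ` Sset"
    proof
      fix Y assume "Y \<in> f ` T"
      then obtain u where u: "u \<in> T" "Y = f u" by (auto simp: image_iff)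
      obtain i j where iju: "u = (i, j)" by (cases u)
      have ij1: "(i, j) \<in> T" using u(1) iju by simp
      have "Y = f (i, j)" using u(2) iju by simp
      then have ij2: "Y = subgroup_conj_class G (P i j)" unfolding f_def by simp
      have le: "i \<le> a" "j \<le> m" "j < m" "(i, j) \<noteq> (0, 0)" using ij1 unfolding T_def by auto
      have cP: "card (P i j) = p ^ i * q ^ j" using P_card[OF le(1) le(2)] .
      have "P i j \<noteq> {\<one>}"
      proof
        assume "P i j = {\<one>}"
        then have "card (P i j) = 1" by simp
        then have "p ^ i * q ^ j = p ^ 0 * q ^ 0" using cP by simp
        then have "i = 0 \<and> j = 0" by (rule pq_eq)
        then show False using le(4) by simp
      qed
      moreover have "subgroup (P i j) G" using P_sub[OF le(1) le(2)] .
      moreover have "normalizer G (P i j) \<noteq> P i j" using P_not_selfnorm[OF le(1) le(3)] .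
      ultimately have "P i j \<in> Sset" unfolding Sset_def by simp
      then show "Y \<in> subgroup_conj_class G ` Sset" using ij2 by (rule image_eqI[rotated])
    qed
    show "subgroup_conj_class G ` Sset \<subseteq> f ` T"
    proof
      fix Y assume "Y \<in> subgroup_conj_class G ` Sset"
      then obtain H where H: "H \<in> Sset" "Y = subgroup_conj_class G H" by blast
      have Hs: "subgroup H G" "H \<noteq> {\<one>}" "normalizer G H \<noteq> H" using H(1) Sset_def by auto
      obtain i j x where ijx: "i \<le> a" "j \<le> m" "x \<in> carrier G" "H = conjugate_set G x (P i j)"
        using classify[OF Hs(1)] by blast
      have "j \<noteq> m"
      proof
        assume "j = m"
        then have "normalizer G (P i j) = P i j" using P_selfnorm[OF ijx(1)] by simp
        then have "normalizer G (conjugate_set G x (P i j)) = conjugate_set G x (P i j)"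
          by (rule conj_selfnorm[OF P_sub[OF ijx(1,2)] _ ijx(3)])
        then have "normalizer G H = H" using ijx(4) by simp
        then show False using Hs(3) by simp
      qed
      moreover have "(i, j) \<noteq> (0, 0)"
      proof
        assume "(i, j) = (0, 0)"
        then have "H = conjugate_set G x {\<one>}" using ijx(4) P_00 by simp
        also have "\<dots> = {\<one>}" using ijx(3) by (simp add: conj_eq)
        finally show False using Hs(2) by simp
      qed
      ultimately have ijT: "(i, j) \<in> T" using ijx(1,2) unfolding T_def by auto
      have "Y = subgroup_conj_class G (P i j)" using H(2) ijx(4) conj_class_eq[OF P_car ijx(3)] by simp
      then have "Y = f (i, j)" unfolding f_def by simp
      then show "Y \<in> f ` T" using ijT by (rule image_eqI)
    qed
  qed
  have "card (subgroup_conj_class G ` Sset) = card T"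
    using bij_betw_same_card[OF bij_betw_imageI[OF inj img]] by simp
  moreover have "card T = (a + 1) * m - 1"
  proof -
    have "(0, 0) \<in> {..a} \<times> {..<m}" using m1 by simp
    then show ?thesis unfolding T_def by (simp add: card_cartesian_product)
  qed
  ultimately show ?thesis unfolding D_count_def Sset_def by simp
qed

end


theorem mainTheorem8:
  fixes G (structure) and C N :: "'a set" and p q a m :: nat
  assumes "group G" and "finite (carrier G)"
    and "frobenius_complement G C"
    and "N = frobenius_kernel G C"
    and "cyclic_group (G\<lparr>carrier := N\<rparr>)" and "card N = p ^ a"
    and "cyclic_group (G\<lparr>carrier := C\<rparr>)" and "card C = q ^ m"
    and "Factorial_Ring.prime p" and "Factorial_Ring.prime q" and "a \<ge> 1" and "m \<ge> 1"
  shows "D_count G = (a + 1) * m - 1"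
proof -
  interpret frob G C N p q a m
    using assms by (simp add: frob_def frob_axioms_def)
  show ?thesis by (rule main_count)
qed

end
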